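(* Let $n\ge5$. On the $n$-gon graph over $\mathbb{F}_2$ with exterior algebra $\Omega_{min}=\Omega(\mathbb{Z}_n)$, the unique quantum metric $g=e^+\otimes e^-+e^-\otimes e^+$ has a unique QLC, namely $\nabla e^\pm=0$. It has $\sigma$ equal to the flip map $e^a\otimes e^b\mapsto e^b\otimes e^a$ ($a,b\in\{+,-\}$) and is flat.
   Context: $A=\mathbb{F}_2(\mathbb{Z}_n)$; $(R_\pm f)(i)=f(i\pm1)$ mod $n$. The $n$-gon graph has arrows $i\to i\pm1$ mod $n$; the calculus has basis over $A$ given by $e^+=\sum_i (i\to i+1)$, $e^-=\sum_i(i\to i-1)$, with $e^\pm f=(R_\pm f)e^\pm$ and ${\rm d} f=(R_+f+f)e^++(R_-f+f)e^-$; $\Omega^1\otimes_A\Omega^1$ is free with basis $e^a\otimes e^b$. $\Omega(\mathbb{Z}_n)$ is the exterior algebra generated by $A$ and $e^\pm$ with relations $(e^\pm)^2=0$, $e^+\wedge e^-+e^-\wedge e^+=0$, ${\rm d} e^\pm=0$. A bimodule connection is a linear $\nabla:\Omega^1\to\Omega^1\otimes_A\Omega^1$ with $\nabla(f\omega)={\rm d} f\otimes\omega+f\nabla\omega$ and $\nabla(\omega f)=(\nabla\omega)f+\sigma(\omega\otimes{\rm d} f)$ for a bimodule map $\sigma$; it is a QLC if $T_\nabla=\wedge\nabla-{\rm d}=0$ and $(\nabla\otimes\mathrm{id}+(\sigma\otimes\mathrm{id})(\mathrm{id}\otimes\nabla))g=0$. Flat means $R_\nabla=({\rm d}\otimes\mathrm{id}-(\wedge\otimes\mathrm{id})(\mathrm{id}\otimes\nabla))\nabla=0$.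 *)

theory Defs
  imports "HOL-Library.Function_Algebras" "Berlekamp_Zassenhaus.Finite_Field"
begin

text \<open>Z_n is the type 'n mod_ring with n = CARD('n); F_2 is bool mod_ring (GF(2)).
 The algebra A = F_2(Z_n) is Z_n => F_2 with pointwise operations.\<close>

type_synonym F2 = "bool mod_ring"
type_synonym 'n alg = "'n mod_ring \<Rightarrow> F2"

datatype sgn = Pl | Mi

text \<open>A 1-form  omega = sum_a (omega a) e^a  (left coefficients);
 an element of Omega^1 (x)_A Omega^1 is  sum_{a,b} (T a b) e^a (x) e^b;
 an element of Omega^2 is  c e^+ /\ e^-  (free of rank one);
 an element of Omega^2 (x)_A Omega^1 is  sum_b (X b) (e^+ /\ e^-) (x) e^b;
 an element of Omega^1 (x)_A Omega^1 (x)_A Omega^1 is sum (W a b c) e^a (x) e^b (x) e^c.\<close>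

type_synonym 'n om1 = "sgn \<Rightarrow> 'n alg"
type_synonym 'n om11 = "sgn \<Rightarrow> sgn \<Rightarrow> 'n alg"
type_synonym 'n om2 = "'n alg"
type_synonym 'n om21 = "sgn \<Rightarrow> 'n alg"
type_synonym 'n om111 = "sgn \<Rightarrow> sgn \<Rightarrow> sgn \<Rightarrow> 'n alg"

definition shift :: "sgn \<Rightarrow> 'n::nontriv mod_ring \<Rightarrow> 'n mod_ring" where
  "shift a i = (if a = Pl then i + 1 else i - 1)"

definition Rsh :: "sgn \<Rightarrow> 'n::nontriv alg \<Rightarrow> 'n alg" where
  "Rsh a f = (\<lambda>i. f (shift a i))"

definition e :: "sgn \<Rightarrow> 'n::nontriv om1" where
  "e b = (\<lambda>a. if a = b then (\<lambda>_. 1) else (\<lambda>_. 0))"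

definition d0 :: "'n::nontriv alg \<Rightarrow> 'n om1" where
  "d0 f = (\<lambda>a. Rsh a f + f)"

text \<open>bimodule structure: e^a f = (R_a f) e^a\<close>
definition lmul1 :: "'n::nontriv alg \<Rightarrow> 'n om1 \<Rightarrow> 'n om1" where
  "lmul1 f w = (\<lambda>a i. f i * w a i)"
definition rmul1 :: "'n::nontriv om1 \<Rightarrow> 'n alg \<Rightarrow> 'n om1" where
  "rmul1 w f = (\<lambda>a i. w a i * Rsh a f i)"
definition lmul11 :: "'n::nontriv alg \<Rightarrow> 'n om11 \<Rightarrow> 'n om11" where
  "lmul11 f T = (\<lambda>a b i. f i * T a b i)"
definition rmul11 :: "'n::nontriv om11 \<Rightarrow> 'n alg \<Rightarrow> 'n om11" where
  "rmul11 T f = (\<lambda>a b i. T a b i * Rsh a (Rsh b f) i)"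

definition tens :: "'n::nontriv om1 \<Rightarrow> 'n om1 \<Rightarrow> 'n om11" where
  "tens w v = (\<lambda>a b i. w a i * Rsh a (v b) i)"

text \<open>coefficient of e^+ /\ e^- in e^a /\ e^c (relations (e^a)^2 = 0, e^+e^- + e^-e^+ = 0)\<close>
definition wsign :: "sgn \<Rightarrow> sgn \<Rightarrow> F2" where
  "wsign a c = (if a = Pl \<and> c = Mi then 1 else if a = Mi \<and> c = Pl then - 1 else 0)"

definition wedge :: "'n::nontriv om11 \<Rightarrow> 'n om2" where
  "wedge T = (\<lambda>i. \<Sum>a\<in>UNIV. \<Sum>c\<in>UNIV. wsign a c * T a c i)"

text \<open>d on 1-forms: d(sum_a w_a e^a) = sum_a d w_a /\ e^a  (d e^a = 0)\<close>
definition d1 :: "'n::nontriv om1 \<Rightarrow> 'n om2" where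
  "d1 w = wedge (\<lambda>c a. d0 (w a) c)"

definition flip :: "'n::nontriv om11 \<Rightarrow> 'n om11" where
  "flip T = (\<lambda>a b. T b a)"

definition gmet :: "'n::nontriv om11" where
  "gmet = (\<lambda>a b. if a \<noteq> b then (\<lambda>_. 1) else (\<lambda>_. 0))"

definition bimodule_map :: "('n::nontriv om11 \<Rightarrow> 'n om11) \<Rightarrow> bool" where
  "bimodule_map \<sigma> \<longleftrightarrow> (\<forall>S T. \<sigma> (S + T) = \<sigma> S + \<sigma> T)
     \<and> (\<forall>f T. \<sigma> (lmul11 f T) = lmul11 f (\<sigma> T))
     \<and> (\<forall>f T. \<sigma> (rmul11 T f) = rmul11 (\<sigma> T) f)"

definition left_connection :: "('n::nontriv om1 \<Rightarrow> 'n om11) \<Rightarrow> bool" where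
  "left_connection N \<longleftrightarrow> (\<forall>w v. N (w + v) = N w + N v)
     \<and> (\<forall>f w. N (lmul1 f w) = tens (d0 f) w + lmul11 f (N w))"

definition is_sigma :: "('n::nontriv om1 \<Rightarrow> 'n om11) \<Rightarrow> ('n om11 \<Rightarrow> 'n om11) \<Rightarrow> bool" where
  "is_sigma N \<sigma> \<longleftrightarrow> bimodule_map \<sigma>
     \<and> (\<forall>w f. N (rmul1 w f) = rmul11 (N w) f + \<sigma> (tens w (d0 f)))"

definition bimodule_connection :: "('n::nontriv om1 \<Rightarrow> 'n om11) \<Rightarrow> bool" where
  "bimodule_connection N \<longleftrightarrow> left_connection N \<and> (\<exists>\<sigma>. is_sigma N \<sigma>)"

definition torsion_free :: "('n::nontriv om1 \<Rightarrow> 'n om11) \<Rightarrow> bool" where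
  "torsion_free N \<longleftrightarrow> (\<forall>w. wedge (N w) - d1 w = 0)"

text \<open>(nabla (x) id + (sigma (x) id)(id (x) nabla)) T, computed on the representative
 T = sum_b eta_b (x) e^b with eta_b = sum_a (T a b) e^a:
 sum_b  nabla eta_b (x) e^b + (sigma (x) id)(eta_b (x) nabla e^b).\<close>
definition metric_deriv :: "('n::nontriv om1 \<Rightarrow> 'n om11) \<Rightarrow> ('n om11 \<Rightarrow> 'n om11) \<Rightarrow> 'n om11 \<Rightarrow> 'n om111" where
  "metric_deriv N \<sigma> T = (\<lambda>x y z. N (\<lambda>a. T a z) x y
     + (\<Sum>b\<in>UNIV. \<sigma> (\<lambda>a c i. T a b i * Rsh a (N (e b) c z) i) x y))"

definition QLC :: "('n::nontriv om1 \<Rightarrow> 'n om11) \<Rightarrow> bool" where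
  "QLC N \<longleftrightarrow> left_connection N \<and> torsion_free N
     \<and> (\<exists>\<sigma>. is_sigma N \<sigma> \<and> metric_deriv N \<sigma> gmet = 0)"

text \<open>(wedge (x) id)(eta (x)_A S) for eta a 1-form and S in Omega^1 (x) Omega^1\<close>
definition wedge12 :: "'n::nontriv om1 \<Rightarrow> 'n om11 \<Rightarrow> 'n om21" where
  "wedge12 v S = (\<lambda>z i. \<Sum>a\<in>UNIV. \<Sum>c\<in>UNIV. wsign a c * v a i * Rsh a (S c z) i)"

text \<open>R_nabla w = (d (x) id - (wedge (x) id)(id (x) nabla)) nabla w, computed on the representative
 nabla w = sum_b eta_b (x) e^b:  sum_b  d eta_b (x) e^b - (wedge (x) id)(eta_b (x) nabla e^b).\<close>
definition curvature :: "('n::nontriv om1 \<Rightarrow> 'n om11) \<Rightarrow> 'n om1 \<Rightarrow> 'n om21" where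
  "curvature N w = (\<lambda>z. d1 (\<lambda>a. N w a z) - (\<Sum>b\<in>UNIV. wedge12 (\<lambda>a. N w a b) (N (e b)) z))"

definition flat :: "('n::nontriv om1 \<Rightarrow> 'n om11) \<Rightarrow> bool" where
  "flat N \<longleftrightarrow> (\<forall>w. curvature N w = 0)"

end

theory Submission
  imports Defs
begin

lemma nz_k:
  assumes "CARD('n::nontriv) \<ge> 5" "0 < k" "k < 5"
  shows "(of_nat k :: 'n mod_ring) \<noteq> 0"
proof
  assume h: "(of_nat k :: 'n mod_ring) = 0"
  have "to_int_mod_ring (of_nat k :: 'n mod_ring) = int k"
    unfolding of_nat_of_int_mod_ring o_def
    by (rule to_int_mod_ring_of_int_mod_ring) (use assms in auto)
  with h assms show False by simp
qed

lemma nz_all: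
  assumes "CARD('n::nontriv) \<ge> 5"
  shows "(2 :: 'n mod_ring) \<noteq> 0" "(3 :: 'n mod_ring) \<noteq> 0" "(4 :: 'n mod_ring) \<noteq> 0"
  using nz_k[OF assms, of 2] nz_k[OF assms, of 3] nz_k[OF assms, of 4] by simp_all

lemma shift_lemmas:
  fixes i :: "'n::nontriv mod_ring"
  assumes "CARD('n) \<ge> 5"
  shows "shift a i \<noteq> i"
    and "shift a (shift b i) = i \<longleftrightarrow> a \<noteq> b"
    and "shift a (shift b i) \<noteq> shift c i"
    and "shift c i \<noteq> shift a (shift b i)"
    and "shift a (shift b i) = shift c (shift d i) \<longleftrightarrow> (a = c \<and> b = d) \<or> (a = d \<and> b = c)"
    and "shift c i = shift d i \<longleftrightarrow> c = d"
  using nz_all[OF assms]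
  by (cases a; cases b; cases c; cases d; simp add: shift_def eq_iff_diff_eq_0[of "i + _"] eq_iff_diff_eq_0[of "i - _"] algebra_simps; fail)+

lemma F2_cases: "(x::F2) = 0 \<or> x = 1"
proof -
  have "to_int_mod_ring x \<in> {0..<2}" using range_to_int_mod_ring[where 'a=bool] by auto
  hence "0 \<le> to_int_mod_ring x \<and> to_int_mod_ring x < 2" by auto
  hence "to_int_mod_ring x = 0 \<or> to_int_mod_ring x = 1" by linarith
  moreover have "to_int_mod_ring (0::F2) = 0" "to_int_mod_ring (1::F2) = 1" by simp_all
  ultimately show ?thesis using to_int_mod_ring_hom.injectivity by metis
qed

lemma F2_two: "(2::F2) = 0"
proof -
  have "(of_nat CARD(bool) :: F2) = 0" by (rule of_nat_card_eq_0)
  thus ?thesis by simp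
qed

lemma F2_add_self[simp]: "(x::F2) + x = 0"
  by (metis F2_two mult_2 mult_zero_left)
lemma F2_add_self2[simp]: "(x::F2) + (x + y) = y"
  by (metis F2_add_self add.assoc add_0)
lemma F2_minus[simp]: "- (x::F2) = x"
  by (metis F2_add_self add_eq_0_iff)
lemma F2_diff[simp]: "(x::F2) - y = x + y"
  by (metis F2_minus diff_conv_add_uminus)

lemma F2_sol: "(x::F2) + y = z \<Longrightarrow> y = z + x"
  by (metis F2_add_self2 add.commute)

lemma shift_comm: "shift a (shift b i) = shift b (shift a i)"
  by (cases a; cases b; simp add: shift_def algebra_simps)

lemma sgn_UNIV: "(UNIV :: sgn set) = {Pl, Mi}" using sgn.exhaust by auto

definition N0 :: "'n::nontriv om1 \<Rightarrow> 'n om11" where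
  "N0 w = (\<lambda>c d. d0 (w d) c)"

definition bas :: "sgn \<Rightarrow> sgn \<Rightarrow> 'n::nontriv om11" where
  "bas a b = (\<lambda>a' b' i. if a' = a \<and> b' = b then 1 else 0)"

lemma repN:
  assumes "left_connection N"
  shows "N w c d i = d0 (w d) c i + w Pl i * N (e Pl) c d i + w Mi i * N (e Mi) c d i"
proof -
  have w: "w = lmul1 (w Pl) (e Pl) + lmul1 (w Mi) (e Mi)"
    apply (intro ext) subgoal for a j by (cases a) (simp_all add: lmul1_def e_def) done
  have "N w = N (lmul1 (w Pl) (e Pl)) + N (lmul1 (w Mi) (e Mi))"
    using assms w unfolding left_connection_def by metis
  also have "\<dots> = tens (d0 (w Pl)) (e Pl) + lmul11 (w Pl) (N (e Pl))
       + (tens (d0 (w Mi)) (e Mi) + lmul11 (w Mi) (N (e Mi)))"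
    using assms unfolding left_connection_def by simp
  finally show ?thesis by (cases d) (simp_all add: tens_def e_def Rsh_def lmul11_def)
qed

lemma repS:
  assumes "bimodule_map \<sigma>"
  shows "\<sigma> T x y i = T Pl Pl i * \<sigma> (bas Pl Pl) x y i + T Pl Mi i * \<sigma> (bas Pl Mi) x y i
     + T Mi Pl i * \<sigma> (bas Mi Pl) x y i + T Mi Mi i * \<sigma> (bas Mi Mi) x y i"
proof -
  have T: "T = lmul11 (T Pl Pl) (bas Pl Pl) + lmul11 (T Pl Mi) (bas Pl Mi)
     + lmul11 (T Mi Pl) (bas Mi Pl) + lmul11 (T Mi Mi) (bas Mi Mi)"
    apply (intro ext) subgoal for a b j by (cases a; cases b) (simp_all add: lmul11_def bas_def) done
  have "\<sigma> T = lmul11 (T Pl Pl) (\<sigma> (bas Pl Pl)) + lmul11 (T Pl Mi) (\<sigma> (bas Pl Mi))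
     + lmul11 (T Mi Pl) (\<sigma> (bas Mi Pl)) + lmul11 (T Mi Mi) (\<sigma> (bas Mi Mi))"
    using assms unfolding bimodule_map_def by (subst T) simp
  thus ?thesis by (simp add: lmul11_def)
qed

lemma d0_const: "d0 (\<lambda>_. c::F2) = 0"
  by (simp add: d0_def Rsh_def fun_eq_iff F2_two)

lemma eq_sigma:
  assumes lc: "left_connection N" and isg: "is_sigma N \<sigma>"
  shows "(if a = d then f (shift d (shift c i)) + f (shift d i) else 0) + f (shift a i) * N (e a) c d i
    = N (e a) c d i * f (shift d (shift c i)) + (f (shift Pl (shift a i)) + f (shift a i)) * \<sigma> (bas a Pl) c d i
      + (f (shift Mi (shift a i)) + f (shift a i)) * \<sigma> (bas a Mi) c d i"
proof -
  have bm: "bimodule_map \<sigma>" using isg unfolding is_sigma_def by simp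
  have "N (rmul1 (e a) f) c d i = rmul11 (N (e a)) f c d i + \<sigma> (tens (e a) (d0 f)) c d i"
    using isg unfolding is_sigma_def by simp
  thus ?thesis
    unfolding repN[OF lc, of "rmul1 (e a) f"] repS[OF bm, of "tens (e a) (d0 f)"]
    by (cases a; cases d) (simp_all add: rmul1_def rmul11_def e_def tens_def d0_def Rsh_def algebra_simps)
qed

lemma QLC_zero:
  assumes card: "CARD('n::nontriv) \<ge> 5" and q: "QLC (N :: 'n om1 \<Rightarrow> 'n om11)"
  shows "N (e Pl) = 0 \<and> N (e Mi) = 0"
proof -
  note SL = shift_lemmas[OF card]
  have lc: "left_connection N" and tf: "torsion_free N" using q unfolding QLC_def by auto
  obtain \<sigma> where isg: "is_sigma N \<sigma>" and md: "metric_deriv N \<sigma> gmet = 0"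
    using q unfolding QLC_def by auto
  have bm: "bimodule_map \<sigma>" using isg unfolding is_sigma_def by simp
  have E2: "\<sigma> (bas a c0) u u i = (if a = u \<and> c0 = u then 1 + N (e a) u u i else 0)" for a c0 u i
  proof -
    have "(if a = u then f (shift u (shift u i)) + f (shift u i) else 0) + f (shift a i) * N (e a) u u i
    = N (e a) u u i * f (shift u (shift u i)) + (f (shift Pl (shift a i)) + f (shift a i)) * \<sigma> (bas a Pl) u u i
      + (f (shift Mi (shift a i)) + f (shift a i)) * \<sigma> (bas a Mi) u u i"
      if "f = (\<lambda>j. if j = shift c0 (shift a i) then 1 else 0)" for f
      by (rule eq_sigma[OF lc isg])
    from this[OF refl] show ?thesis
      apply (cases a; cases c0; cases u; simp add: SL)
      by (metis F2_sol add.commute)+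
  qed
  have E1: "N (e a) u u i = 0" if "a \<noteq> u" for a u i
  proof -
    have "(if a = u then f (shift u (shift u i)) + f (shift u i) else 0) + f (shift a i) * N (e a) u u i
    = N (e a) u u i * f (shift u (shift u i)) + (f (shift Pl (shift a i)) + f (shift a i)) * \<sigma> (bas a Pl) u u i
      + (f (shift Mi (shift a i)) + f (shift a i)) * \<sigma> (bas a Mi) u u i"
      if "f = (\<lambda>j. if j = shift a i then 1 else 0)" for f
      by (rule eq_sigma[OF lc isg])
    from this[OF refl] that show ?thesis
      by (cases a; cases u; simp add: SL E2)
  qed
  have T: "N (e a) Pl Mi i = N (e a) Mi Pl i" for a i
  proof -
    have "wedge (N (e a)) i - d1 (e a) i = 0" using tf unfolding torsion_free_def by (simp add: fun_eq_iff)
    hence "N (e a) Pl Mi i + N (e a) Mi Pl i = 0"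
      by (cases a; simp add: wedge_def d1_def sgn_UNIV wsign_def e_def d0_def Rsh_def)
    thus ?thesis by (metis F2_sol add_0)
  qed
  have M: "N (e u) u u i + N (e v) u v (shift u i) * (1 + N (e u) u u i) = 0"
    if "u \<noteq> v" for u v i
  proof -
    have R: "\<sigma> (\<lambda>a c i. gmet a b i * Rsh a (N (e b) c v) i) x y j =
       (\<lambda>a c i. gmet a b i * Rsh a (N (e b) c v) i) Pl Pl j * \<sigma> (bas Pl Pl) x y j
     + (\<lambda>a c i. gmet a b i * Rsh a (N (e b) c v) i) Pl Mi j * \<sigma> (bas Pl Mi) x y j
     + (\<lambda>a c i. gmet a b i * Rsh a (N (e b) c v) i) Mi Pl j * \<sigma> (bas Mi Pl) x y j
     + (\<lambda>a c i. gmet a b i * Rsh a (N (e b) c v) i) Mi Mi j * \<sigma> (bas Mi Mi) x y j" for b x y j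
      by (rule repS[OF bm])
    have "metric_deriv N \<sigma> gmet u u v i = 0" using md by (simp add: fun_eq_iff)
    hence "N (\<lambda>a. gmet a v) u u i + \<sigma> (\<lambda>a c i. gmet a Pl i * Rsh a (N (e Pl) c v) i) u u i
       + \<sigma> (\<lambda>a c i. gmet a Mi i * Rsh a (N (e Mi) c v) i) u u i = 0"
      by (simp add: metric_deriv_def sgn_UNIV add.assoc)
    with that show ?thesis
      unfolding R repN[OF lc, of "\<lambda>a. gmet a v"]
      by (cases u; cases v; simp add: E2 gmet_def d0_def Rsh_def F2_two)
  qed
  have A: "N (e u) u u i = 0" for u i
  proof -
    obtain v where uv: "u \<noteq> v" by (cases u) auto
    from M[OF uv, of i] show ?thesis
      using F2_cases[of "N (e u) u u i"] by (auto simp: F2_two)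
  qed
  have B: "N (e v) u v j = 0" if uv: "u \<noteq> v" for u v j
  proof -
    have "shift u (shift v j) = j" using SL(2) uv by auto
    with M[OF uv, of "shift v j"] show ?thesis by (simp add: A)
  qed
  have "N (e a) c d i = 0" for a c d i
    using A[of a i] B[of d a i] B[of c a i] E1[of a c i] T[of a i]
    by (cases a; cases c; cases d; simp)
  thus ?thesis by (simp add: fun_eq_iff)
qed

lemma N0_e: "N0 (e b) = 0"
  by (simp add: N0_def e_def d0_def Rsh_def fun_eq_iff F2_two)

lemma lc_N0: "left_connection N0"
  unfolding left_connection_def
  by (simp add: N0_def d0_def Rsh_def fun_eq_iff tens_def lmul1_def lmul11_def algebra_simps)

lemma tf_N0: "torsion_free N0"
  unfolding torsion_free_def by (simp add: N0_def d1_def)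

lemma bm_flip: "bimodule_map flip"
  unfolding bimodule_map_def
  by (simp add: flip_def fun_eq_iff lmul11_def rmul11_def Rsh_def shift_comm)

lemma is_flip: "is_sigma N0 flip"
  unfolding is_sigma_def
  by (simp add: bm_flip N0_def flip_def fun_eq_iff rmul1_def rmul11_def tens_def d0_def Rsh_def
      shift_comm algebra_simps)

lemma md_N0: "metric_deriv N0 flip gmet = 0"
  by (simp add: metric_deriv_def N0_e fun_eq_iff N0_def gmet_def d0_def Rsh_def F2_two flip_def
     sgn_UNIV e_def)

lemma QLC_N0: "QLC N0"
  unfolding QLC_def using lc_N0 tf_N0 is_flip md_N0 by blast

lemma flat_N0: "flat N0"
  unfolding flat_def curvature_def N0_e
  by (simp add:  fun_eq_iff wedge12_def d1_def wedge_def sgn_UNIV wsign_def N0_def d0_def Rsh_def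
      shift_def algebra_simps)

lemma sig_unique:
  assumes card: "CARD('n::nontriv) \<ge> 5" and lc: "left_connection (N :: 'n om1 \<Rightarrow> 'n om11)"
    and i1: "is_sigma N \<sigma>1" and i2: "is_sigma N \<sigma>2"
  shows "\<sigma>1 = \<sigma>2"
proof -
  note SL = shift_lemmas[OF card]
  have B: "\<sigma>1 (bas a c) x y i = \<sigma>2 (bas a c) x y i" for a c x y i
  proof -
    have "\<And>\<sigma>. is_sigma N \<sigma> \<Longrightarrow> (if a = y then f (shift y (shift x i)) + f (shift y i) else 0) + f (shift a i) * N (e a) x y i
    = N (e a) x y i * f (shift y (shift x i)) + (f (shift Pl (shift a i)) + f (shift a i)) * \<sigma> (bas a Pl) x y i
      + (f (shift Mi (shift a i)) + f (shift a i)) * \<sigma> (bas a Mi) x y i"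
      if "f = (\<lambda>j. if j = shift c (shift a i) then 1 else 0)" for f
      by (rule eq_sigma[OF lc])
    from this[OF refl i1] this[OF refl i2] show ?thesis
      by (cases a; cases c; simp add: SL)
  qed
  have b1: "bimodule_map \<sigma>1" and b2: "bimodule_map \<sigma>2" using i1 i2 unfolding is_sigma_def by auto
  show ?thesis
  proof (intro ext)
    fix T x y i
    show "\<sigma>1 T x y i = \<sigma>2 T x y i"
      unfolding repS[OF b1, of T] repS[OF b2, of T] by (simp only: B)
  qed
qed

lemma QLC_eq_N0:
  assumes card: "CARD('n::nontriv) \<ge> 5" and q: "QLC (N :: 'n om1 \<Rightarrow> 'n om11)"
  shows "N = N0"
proof -
  have lc: "left_connection N" using q unfolding QLC_def by auto
  have z: "N (e Pl) = 0" "N (e Mi) = 0" using QLC_zero[OF card q] by auto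
  show ?thesis
    by (intro ext) (simp add: repN[OF lc] z N0_def)
qed

theorem proposition4p8:
  fixes n :: nat
  assumes "n = CARD('n::nontriv)" and "n \<ge> 5"
  shows "(\<exists>!N :: 'n om1 \<Rightarrow> 'n om11. QLC N)
    \<and> (\<forall>N :: 'n om1 \<Rightarrow> 'n om11. QLC N \<longrightarrow>
          N (e Pl) = 0 \<and> N (e Mi) = 0
        \<and> bimodule_connection N
        \<and> (\<forall>\<sigma>. is_sigma N \<sigma> \<longleftrightarrow> \<sigma> = flip)
        \<and> flat N)"
proof -
  have card: "CARD('n) \<ge> 5" using assms by simp
  have "\<exists>!N :: 'n om1 \<Rightarrow> 'n om11. QLC N"
    using QLC_N0 QLC_eq_N0[OF card] by blast
  moreover have "\<forall>N :: 'n om1 \<Rightarrow> 'n om11. QLC N \<longrightarrow>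
          N (e Pl) = 0 \<and> N (e Mi) = 0
        \<and> bimodule_connection N
        \<and> (\<forall>\<sigma>. is_sigma N \<sigma> \<longleftrightarrow> \<sigma> = flip)
        \<and> flat N"
  proof (intro allI impI)
    fix N :: "'n om1 \<Rightarrow> 'n om11"
    assume "QLC N"
    hence N: "N = N0" by (rule QLC_eq_N0[OF card])
    have "bimodule_connection (N0 :: 'n om1 \<Rightarrow> 'n om11)"
      unfolding bimodule_connection_def using lc_N0 is_flip by blast
    moreover have "is_sigma (N0 :: 'n om1 \<Rightarrow> 'n om11) \<sigma> \<longleftrightarrow> \<sigma> = flip" for \<sigma>
      using sig_unique[OF card lc_N0 _ is_flip] is_flip by blast
    ultimately show "N (e Pl) = 0 \<and> N (e Mi) = 0
        \<and> bimodule_connection N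
        \<and> (\<forall>\<sigma>. is_sigma N \<sigma> \<longleftrightarrow> \<sigma> = flip)
        \<and> flat N"
      unfolding N using N0_e flat_N0 by blast
  qed
  ultimately show ?thesis by blast
qed

end
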